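(* Let $\mathfrak g=\mathfrak{sl}_3$, $\lambda_1,\lambda_2\in P^+$ such that $s_1(\lambda_1-\lambda_2)\in P^+$ and $s_1(\lambda_1-\lambda_2)(h_1)>0$, and let $a\in\{1,\ s_1(\lambda_1-\lambda_2)(h_1)\}$. Then for each $\nu\in P^+$ there exists an integer $\ell\ge0$ such that every $(s_{1,1},s_{1,2},s_{1,3},s_{2,2},s_{2,3})\in\mathbf T(\lambda_2)^\nu_{\lambda_1}$ satisfies $s_{1,1}\ge s_{2,2}+\ell$ and $s_{1,3}\ge a-\ell$.
   Context: $\mathfrak g=\mathfrak{sl}_3$ with simple coroots $h_1,h_2$, fundamental weights $\omega_1,\omega_2$, simple reflections $s_1,s_2$, dominant integral weights $P^+$. For $\lambda\in P^+$, $\mathbf T(\lambda)$ is the set of $(s_{1,1},s_{1,2},s_{1,3},s_{2,2},s_{2,3})\in\mathbb Z_{\ge0}^5$ with $s_{1,1}+s_{1,2}+s_{1,3}=\lambda(h_1)+\lambda(h_2)$, $s_{2,2}+s_{2,3}=\lambda(h_2)$, $s_{1,1}\ge s_{2,2}$, $s_{1,1}+s_{1,2}\ge s_{2,2}+s_{2,3}$. For $\lambda,\mu,\nu\in P^+$, $\mathbf T(\lambda)^\nu_\mu$ is the set of elements of $\mathbf T(\lambda)$ satisfying $s_{1,2}\le\mu(h_1)$, $s_{1,3}\le\mu(h_2)$, $s_{2,3}+s_{1,3}\le\mu(h_2)+s_{1,2}$, $\nu(h_1)+\nu(h_2)=\mu(h_1)+\mu(h_2)+s_{1,1}-s_{1,3}-s_{2,3}$,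 and $\nu(h_2)=\mu(h_2)+s_{1,2}+s_{2,2}-s_{1,3}-s_{2,3}$. *)

theory Defs
  imports Main
begin

text \<open>Integral weights of sl_3 are encoded by their values on the simple coroots:
  a weight w is the pair (w(h_1), w(h_2)) of integers.\<close>
type_synonym weight = "int \<times> int"

definition dominant :: "weight \<Rightarrow> bool" where
  "dominant w \<longleftrightarrow> fst w \<ge> 0 \<and> snd w \<ge> 0"

definition wminus :: "weight \<Rightarrow> weight \<Rightarrow> weight" where
  "wminus v w = (fst v - fst w, snd v - snd w)"

text \<open>Simple reflection s_1: s_1(w) = w - w(h_1) alpha_1, with alpha_1(h_1)=2, alpha_1(h_2)=-1.\<close>
definition s1 :: "weight \<Rightarrow> weight" where
  "s1 w = (- fst w, snd w + fst w)"

type_synonym tup = "int \<times> int \<times> int \<times> int \<times> int"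

definition Tset :: "weight \<Rightarrow> tup set" where
  "Tset lam = {(s11, s12, s13, s22, s23).
      s11 \<ge> 0 \<and> s12 \<ge> 0 \<and> s13 \<ge> 0 \<and> s22 \<ge> 0 \<and> s23 \<ge> 0 \<and>
      s11 + s12 + s13 = fst lam + snd lam \<and>
      s22 + s23 = snd lam \<and>
      s11 \<ge> s22 \<and> s11 + s12 \<ge> s22 + s23}"

definition Tnu :: "weight \<Rightarrow> weight \<Rightarrow> weight \<Rightarrow> tup set" where
  "Tnu lam mu nu = {(s11, s12, s13, s22, s23) \<in> Tset lam.
      s12 \<le> fst mu \<and> s13 \<le> snd mu \<and> s23 + s13 \<le> snd mu + s12 \<and>
      fst nu + snd nu = fst mu + snd mu + s11 - s13 - s23 \<and>
      snd nu = snd mu + s12 + s22 - s13 - s23}"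

end

theory Submission
  imports Defs
begin

lemma key:
  fixes p1 p2 q1 q2 n1 n2 :: int
  assumes "q1 - p1 > 0" "p1+p2-q1-q2 \<ge> 0" "p1 \<ge> 0" "p2 \<ge> 0" "q1\<ge>0" "q2\<ge>0"
  and "s11 \<ge> 0" "s12 \<ge> 0" "s13 \<ge> 0" "s22 \<ge> 0" "s23 \<ge> 0"
  "s11 + s12 + s13 = q1+q2" "s22+s23 = q2" "s11 \<ge> s22" "s11+s12 \<ge> s22+s23"
  "s12 \<le> p1" "s13 \<le> p2" "s23+s13 \<le> p2+s12"
  "n1+n2 = p1+p2+s11-s13-s23" "n2 = p2+s12+s22-s13-s23"
  and "t11 \<ge> 0" "t12 \<ge> 0" "t13 \<ge> 0" "t22 \<ge> 0" "t23 \<ge> 0"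
  "t11 + t12 + t13 = q1+q2" "t22+t23 = q2" "t11 \<ge> t22" "t11+t12 \<ge> t22+t23"
  "t12 \<le> p1" "t13 \<le> p2" "t23+t13 \<le> p2+t12"
  "n1+n2 = p1+p2+t11-t13-t23" "n2 = p2+t12+t22-t13-t23"
  "a = 1 \<or> a = q1 - p1"
  shows "s13 \<ge> a - (t11 - t22)"
  using assms by linarith


theorem proposition6p5:
  fixes lam1 lam2 :: weight and a :: int
  assumes "dominant lam1" and "dominant lam2"
    and "dominant (s1 (wminus lam1 lam2))"
    and "fst (s1 (wminus lam1 lam2)) > 0"
    and "a \<in> {1, fst (s1 (wminus lam1 lam2))}"
  shows "\<forall>nu. dominant nu \<longrightarrow>
           (\<exists>l::int. l \<ge> 0 \<and>
              (\<forall>s11 s12 s13 s22 s23. (s11, s12, s13, s22, s23) \<in> Tnu lam2 lam1 nu \<longrightarrow>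
                  s11 \<ge> s22 + l \<and> s13 \<ge> a - l))"
proof (intro allI impI)
  fix nu :: weight assume "dominant nu"
  obtain p1 p2 where L1: "lam1 = (p1,p2)" by (cases lam1)
  obtain q1 q2 where L2: "lam2 = (q1,q2)" by (cases lam2)
  obtain n1 n2 where N: "nu = (n1,n2)" by (cases nu)
  have A: "q1 - p1 > 0" "p1+p2-q1-q2 \<ge> 0" "p1 \<ge> 0" "p2 \<ge> 0" "q1\<ge>0" "q2\<ge>0"
     "a = 1 \<or> a = q1 - p1"
    using assms by (auto simp: L1 L2 dominant_def s1_def wminus_def)
  let ?T = "Tnu lam2 lam1 nu"
  show "\<exists>l::int. l \<ge> 0 \<and>
              (\<forall>s11 s12 s13 s22 s23. (s11, s12, s13, s22, s23) \<in> ?T \<longrightarrow>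
                  s11 \<ge> s22 + l \<and> s13 \<ge> a - l)"
  proof (cases "?T = {}")
    case True thus ?thesis by auto
  next
    case False
    then obtain u where "u \<in> ?T" by auto
    define P where "P = (\<lambda>n::nat. \<exists>s11 s12 s13 s22 s23. (s11, s12, s13, s22, s23) \<in> ?T \<and> n = nat (s11 - s22))"
    have "P (nat (fst u - fst (snd (snd (snd u)))))" unfolding P_def using \<open>u \<in> ?T\<close>
      by (cases u) (simp, blast)
    hence PL: "P (LEAST n. P n)" by (rule LeastI)
    then obtain t11 t12 t13 t22 t23 where T: "(t11, t12, t13, t22, t23) \<in> ?T"
       "(LEAST n. P n) = nat (t11 - t22)" unfolding P_def by blast
    have tge: "t11 \<ge> t22" using T(1) by (simp add: Tnu_def Tset_def)
    show ?thesis
    proof (rule exI[of _ "t11 - t22"], intro conjI allI impI)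
      show "t11 - t22 \<ge> 0" using tge by simp
    next
      fix s11 s12 s13 s22 s23 assume S: "(s11, s12, s13, s22, s23) \<in> ?T"
      hence "P (nat (s11 - s22))" unfolding P_def by blast
      hence "(LEAST n. P n) \<le> nat (s11 - s22)" by (rule Least_le)
      moreover have "s11 \<ge> s22" using S by (simp add: Tnu_def Tset_def)
      ultimately show "s22 + (t11 - t22) \<le> s11" using T(2) tge by linarith
      show "a - (t11 - t22) \<le> s13"
      proof -
        have s: "s11 \<ge> 0" "s12 \<ge> 0" "s13 \<ge> 0" "s22 \<ge> 0" "s23 \<ge> 0"
  "s11 + s12 + s13 = q1+q2" "s22+s23 = q2" "s11 \<ge> s22" "s11+s12 \<ge> s22+s23"
  "s12 \<le> p1" "s13 \<le> p2" "s23+s13 \<le> p2+s12"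
  "n1+n2 = p1+p2+s11-s13-s23" "n2 = p2+s12+s22-s13-s23"
          using S by (simp_all add: Tnu_def Tset_def L1 L2 N)
        have t: "t11 \<ge> 0" "t12 \<ge> 0" "t13 \<ge> 0" "t22 \<ge> 0" "t23 \<ge> 0"
  "t11 + t12 + t13 = q1+q2" "t22+t23 = q2" "t11 \<ge> t22" "t11+t12 \<ge> t22+t23"
  "t12 \<le> p1" "t13 \<le> p2" "t23+t13 \<le> p2+t12"
  "n1+n2 = p1+p2+t11-t13-t23" "n2 = p2+t12+t22-t13-t23"
          using T(1) by (simp_all add: Tnu_def Tset_def L1 L2 N)
        show ?thesis by (rule key[OF A(1-6) s t A(7)])
      qed
    qed
  qed
qed

end
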